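(* Let $\mathcal{T}=(V,\mathsf{p})$ and $\tilde{\mathcal{T}}=(V,\tilde{\mathsf{p}})$ be directed forests on the same vertex set such that $\mathcal{T}$ is thinner than $\tilde{\mathcal{T}}$. Then for every $k\in\mathbb{N}$, the $k$-th power $\mathcal{T}^k$ is thinner than $\tilde{\mathcal{T}}^k$.
   Context: A directed forest is a pair $\mathcal{T}=(V,\mathsf{p})$ where $V$ is a nonempty set and $\mathsf{p}\colon V\to V$ satisfies: if $n\in\mathbb{N}$, $v\in V$ and $\mathsf{p}^n(v)=v$, then $\mathsf{p}(v)=v$. Roots: $\mathrm{root}(\mathcal{T})=\{v:\mathsf{p}(v)=v\}$. $\mathcal{T}_1=(V,\mathsf{p}_1)$ is thinner than $\mathcal{T}_2=(V,\mathsf{p}_2)$ if $\mathsf{p}_1(v)\in\{v,\mathsf{p}_2(v)\}$ for all $v\in V$. For $k\in\mathbb{N}$ the $k$-th power of $\mathcal{T}=(V,\mathsf{p})$ is $\mathcal{T}^k=(V,\mathsf{p}^{[k]})$, where $\mathsf{p}^{[k]}(v)=\mathsf{p}^k(v)$ if $\mathsf{p}^{k-1}(v)\notin\mathrm{root}(\mathcal{T})$ and $\mathsf{p}^{[k]}(v)=v$ if $\mathsf{p}^{k-1}(v)\in\mathrm{root}(\mathcal{T})$ (here $\mathsf{p}^0=\mathrm{id}_V$); $\mathcal{T}^k$ is a directed forest. *)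

theory Defs
  imports Main
begin

text \<open>The natural numbers n are taken positive (n = 0 would force p to be the identity).\<close>
definition directed_forest :: "'a set \<Rightarrow> ('a \<Rightarrow> 'a) \<Rightarrow> bool" where
  "directed_forest V p \<longleftrightarrow> V \<noteq> {} \<and> (\<forall>v\<in>V. p v \<in> V) \<and>
     (\<forall>n::nat. \<forall>v\<in>V. n \<ge> 1 \<and> (p ^^ n) v = v \<longrightarrow> p v = v)"

definition forest_roots :: "'a set \<Rightarrow> ('a \<Rightarrow> 'a) \<Rightarrow> 'a set" where
  "forest_roots V p = {v\<in>V. p v = v}"

definition thinner :: "'a set \<Rightarrow> ('a \<Rightarrow> 'a) \<Rightarrow> ('a \<Rightarrow> 'a) \<Rightarrow> bool" where
  "thinner V p1 p2 \<longleftrightarrow> (\<forall>v\<in>V. p1 v \<in> {v, p2 v})"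

definition forest_power :: "'a set \<Rightarrow> ('a \<Rightarrow> 'a) \<Rightarrow> nat \<Rightarrow> 'a \<Rightarrow> 'a" where
  "forest_power V p k v = (if (p ^^ (k - 1)) v \<in> forest_roots V p then v else (p ^^ k) v)"

end

theory Submission
  imports Defs
begin

lemma funpow_in: "(\<forall>v\<in>V. p v \<in> V) \<Longrightarrow> v \<in> V \<Longrightarrow> (p ^^ j) v \<in> V"
  by (induction j) auto

lemma funpow_fix: "p ((p ^^ j) v) = (p ^^ j) v \<Longrightarrow> (p ^^ (j + m)) v = (p ^^ j) v"
  by (induction m) auto

theorem proposition4p2:
  fixes V :: "'a set" and p pt :: "'a \<Rightarrow> 'a" and k :: nat
  assumes "directed_forest V p" and "directed_forest V pt"
    and "thinner V p pt"
    and "k \<ge> 1"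
  shows "thinner V (forest_power V p k) (forest_power V pt k)"
  unfolding thinner_def
proof
  fix v assume v: "v \<in> V"
  have cl: "\<forall>v\<in>V. p v \<in> V" using assms(1) unfolding directed_forest_def by blast
  have th: "\<And>u. u \<in> V \<Longrightarrow> p u \<noteq> u \<Longrightarrow> p u = pt u" using assms(3) unfolding thinner_def by blast
  show "forest_power V p k v \<in> {v, forest_power V pt k v}"
  proof (cases "(p ^^ (k - 1)) v \<in> forest_roots V p")
    case True then show ?thesis by (simp add: forest_power_def)
  next
    case False
    hence nr: "p ((p ^^ (k - 1)) v) \<noteq> (p ^^ (k - 1)) v"
      using funpow_in[OF cl v] by (simp add: forest_roots_def)
    have nrj: "p ((p ^^ j) v) \<noteq> (p ^^ j) v" if "j \<le> k - 1" for j
    proof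
      assume "p ((p ^^ j) v) = (p ^^ j) v"
      from funpow_fix[OF this, of "k - 1 - j"] that
      have "(p ^^ (k - 1)) v = (p ^^ j) v" by (metis le_add_diff_inverse)
      with nr \<open>p ((p ^^ j) v) = (p ^^ j) v\<close> show False by simp
    qed
    have eq: "j \<le> k \<Longrightarrow> (p ^^ j) v = (pt ^^ j) v" for j
    proof (induction j)
      case 0 then show ?case by simp
    next
      case (Suc j)
      then have "(p ^^ j) v = (pt ^^ j) v" by simp
      moreover have "p ((p ^^ j) v) = pt ((p ^^ j) v)"
        using th[OF funpow_in[OF cl v] nrj] Suc.prems by simp
      ultimately show ?case by simp
    qed
    have "pt ((pt ^^ (k - 1)) v) \<noteq> (pt ^^ (k - 1)) v"
      using eq[of "k - 1"] th[OF funpow_in[OF cl v] nr] nr by simp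
    hence "(pt ^^ (k - 1)) v \<notin> forest_roots V pt" by (simp add: forest_roots_def)
    then have "forest_power V pt k v = (p ^^ k) v" using eq[of k] by (simp add: forest_power_def)
    moreover have "forest_power V p k v = (p ^^ k) v" using False by (simp add: forest_power_def)
    ultimately show ?thesis by simp
  qed
qed

end
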